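(* Let $T:M_d\to M_d$ be a completely positive map with $T(I)\le I$, whose stabilization index $n_T$ is finite. If $T$ is corner-faithful, then $T$ is unital, i.e. $T(I)=I$.
   Context: $M_d$ is the algebra of complex $d\times d$ matrices with the positive semidefinite order. The defect is $d(T)=I-T(I)\ge 0$. The stabilization index is $n_T=\min\{n\ge1: T^n(d(T))=0\}$ (with $T^0=\mathrm{id}$). For a positive semidefinite $x$, $\mathrm{supp}(x)$ denotes the orthogonal projection onto the range of $x$. When $n_T<\infty$, the orbit-support projection is $Q_T=\bigvee_{k<n_T}\mathrm{supp}(T^k(d(T)))$. $T$ is corner-faithful if for every $x\ge0$ with $x\neq0$ and $\mathrm{supp}(x)\le Q_T$ one has $T(x)\ne 0$. *)

theory Defs
  imports Complex_Main "Jordan_Normal_Form.Matrix"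
begin

definition adj :: "complex mat \<Rightarrow> complex mat" where
  "adj A = mat (dim_col A) (dim_row A) (\<lambda>(i,j). cnj (A $$ (j,i)))"

definition psd :: "nat \<Rightarrow> complex mat \<Rightarrow> bool" where
  "psd n A \<longleftrightarrow> A \<in> carrier_mat n n \<and> adj A = A \<and>
     (\<forall>v \<in> carrier_vec n. Im ((A *\<^sub>v v) \<bullet>c v) = 0 \<and> Re ((A *\<^sub>v v) \<bullet>c v) \<ge> 0)"

definition loewner_le :: "nat \<Rightarrow> complex mat \<Rightarrow> complex mat \<Rightarrow> bool" where
  "loewner_le n A B \<longleftrightarrow> A \<in> carrier_mat n n \<and> B \<in> carrier_mat n n \<and> psd n (B - A)"

definition mat_range :: "complex mat \<Rightarrow> complex vec set" where
  "mat_range A = {A *\<^sub>v v | v. v \<in> carrier_vec (dim_col A)}"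

definition proj_onto :: "nat \<Rightarrow> complex vec set \<Rightarrow> complex mat" where
  "proj_onto n S = (THE P. P \<in> carrier_mat n n \<and> P * P = P \<and> adj P = P \<and> mat_range P = S)"

definition supp :: "nat \<Rightarrow> complex mat \<Rightarrow> complex mat" where
  "supp n x = proj_onto n (mat_range x)"

definition linear_map_on :: "nat \<Rightarrow> (complex mat \<Rightarrow> complex mat) \<Rightarrow> bool" where
  "linear_map_on d T \<longleftrightarrow>
     (\<forall>A \<in> carrier_mat d d. T A \<in> carrier_mat d d) \<and>
     (\<forall>A \<in> carrier_mat d d. \<forall>B \<in> carrier_mat d d. T (A + B) = T A + T B) \<and>
     (\<forall>A \<in> carrier_mat d d. \<forall>c. T (c \<cdot>\<^sub>m A) = c \<cdot>\<^sub>m T A)"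

text \<open>The ampliation id_k tensor T acting on M_k(M_d), identified with (k d) x (k d) matrices
  partitioned into d x d blocks.\<close>
definition ampliation :: "nat \<Rightarrow> nat \<Rightarrow> (complex mat \<Rightarrow> complex mat) \<Rightarrow> complex mat \<Rightarrow> complex mat" where
  "ampliation d k T X = mat (k*d) (k*d) (\<lambda>(i,j).
      T (mat d d (\<lambda>(a,b). X $$ ((i div d) * d + a, (j div d) * d + b))) $$ (i mod d, j mod d))"

definition completely_positive :: "nat \<Rightarrow> (complex mat \<Rightarrow> complex mat) \<Rightarrow> bool" where
  "completely_positive d T \<longleftrightarrow> linear_map_on d T \<and>
     (\<forall>k\<ge>1. \<forall>X. psd (k*d) X \<longrightarrow> psd (k*d) (ampliation d k T X))"

definition defect :: "nat \<Rightarrow> (complex mat \<Rightarrow> complex mat) \<Rightarrow> complex mat" where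
  "defect d T = 1\<^sub>m d - T (1\<^sub>m d)"

definition stab_finite :: "nat \<Rightarrow> (complex mat \<Rightarrow> complex mat) \<Rightarrow> bool" where
  "stab_finite d T \<longleftrightarrow> (\<exists>n\<ge>1. (T ^^ n) (defect d T) = 0\<^sub>m d d)"

text \<open>Stabilization index n_T (meaningful when stab_finite holds).\<close>
definition stab_index :: "nat \<Rightarrow> (complex mat \<Rightarrow> complex mat) \<Rightarrow> nat" where
  "stab_index d T = (LEAST n. n \<ge> 1 \<and> (T ^^ n) (defect d T) = 0\<^sub>m d d)"

definition subspace_sum :: "nat \<Rightarrow> nat \<Rightarrow> (nat \<Rightarrow> complex vec set) \<Rightarrow> complex vec set" where
  "subspace_sum d m S = {foldr (+) (map f [0..<m]) (0\<^sub>v d) | f. \<forall>k<m. f k \<in> S k}"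

text \<open>Orbit-support projection Q_T: the join of supp(T^k(d(T))), k < n_T, i.e. the orthogonal
  projection onto the (closed) sum of their ranges.\<close>
definition orbit_support :: "nat \<Rightarrow> (complex mat \<Rightarrow> complex mat) \<Rightarrow> complex mat" where
  "orbit_support d T = proj_onto d (subspace_sum d (stab_index d T)
      (\<lambda>k. mat_range (supp d ((T ^^ k) (defect d T)))))"

definition corner_faithful :: "nat \<Rightarrow> (complex mat \<Rightarrow> complex mat) \<Rightarrow> bool" where
  "corner_faithful d T \<longleftrightarrow> (\<forall>x. psd d x \<and> x \<noteq> 0\<^sub>m d d \<and> loewner_le d (supp d x) (orbit_support d T)
      \<longrightarrow> T x \<noteq> 0\<^sub>m d d)"

end

theory Submission
  imports Defs
begin

declare minus_carrier_mat[simp]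

definition isproj :: "nat \<Rightarrow> complex mat \<Rightarrow> bool" where
  "isproj n P \<longleftrightarrow> P \<in> carrier_mat n n \<and> P * P = P \<and> adj P = P"

lemma adj_carrier[simp]: "A \<in> carrier_mat n m \<Longrightarrow> adj A \<in> carrier_mat m n"
  by (simp add: adj_def)

lemma adj_index[simp]: "i < dim_col A \<Longrightarrow> j < dim_row A \<Longrightarrow> adj A $$ (i,j) = cnj (A $$ (j,i))"
  by (simp add: adj_def)

lemma adj_dims[simp]: "dim_row (adj A) = dim_col A" "dim_col (adj A) = dim_row A"
  by (simp_all add: adj_def)

lemma herm_entry: "adj A = A \<Longrightarrow> i < dim_row A \<Longrightarrow> j < dim_col A \<Longrightarrow> cnj (A $$ (j,i)) = A $$ (i,j)"
  by (metis adj_dims adj_index)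

lemma adj_mult: assumes "A \<in> carrier_mat n m" "B \<in> carrier_mat m k"
  shows "adj (A * B) = adj B * adj A"
  apply (rule eq_matI)
  using assms by (auto simp: scalar_prod_def row_def col_def ac_simps)

lemma adj_minus: assumes "A \<in> carrier_mat n m" "B \<in> carrier_mat n m"
  shows "adj (A - B) = adj A - adj B"
  apply (rule eq_matI) using assms by auto

lemma cscalar_adj: assumes A: "A \<in> carrier_mat n n" and v: "v \<in> carrier_vec n" and w: "w \<in> carrier_vec n"
  shows "(A *\<^sub>v v) \<bullet>c w = v \<bullet>c (adj A *\<^sub>v w)"
proof -
  have "(A *\<^sub>v v) \<bullet>c w = (\<Sum>i<n. (\<Sum>j<n. A $$ (i,j) * v $ j) * cnj (w $ i))"
    using A v w by (simp add: scalar_prod_def row_def lessThan_atLeast0)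
  also have "\<dots> = (\<Sum>i<n. \<Sum>j<n. v $ j * (A $$ (i,j) * cnj (w $ i)))"
    by (simp add: sum_distrib_left sum_distrib_right algebra_simps)
  also have "\<dots> = (\<Sum>j<n. \<Sum>i<n. v $ j * (A $$ (i,j) * cnj (w $ i)))"
    by (rule sum.swap)
  also have "\<dots> = v \<bullet>c (adj A *\<^sub>v w)"
    using A v w by (simp add: scalar_prod_def row_def lessThan_atLeast0 sum_distrib_left ac_simps)
  finally show ?thesis .
qed

lemma mat_eq_by_vec: fixes A B :: "'a::comm_ring_1 mat" assumes A: "A \<in> carrier_mat n n" and B: "B \<in> carrier_mat n n"
  and h: "\<And>v. v \<in> carrier_vec n \<Longrightarrow> A *\<^sub>v v = B *\<^sub>v v"
  shows "A = B"
proof (rule eq_matI)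
  fix i j assume i: "i < dim_row B" and j: "j < dim_col B"
  have "(A *\<^sub>v unit_vec n j) $ i = (B *\<^sub>v unit_vec n j) $ i" using h by simp
  moreover have "(A *\<^sub>v unit_vec n j) $ i = A $$ (i,j)" using A B i j by simp
  moreover have "(B *\<^sub>v unit_vec n j) $ i = B $$ (i,j)" using A B i j by simp
  ultimately show "A $$ (i,j) = B $$ (i,j)" by simp
qed (use A B in auto)

lemma proj_fix: assumes "isproj n P" "w \<in> mat_range P" shows "P *\<^sub>v w = w"
proof -
  from assms obtain v where v: "v \<in> carrier_vec n" "w = P *\<^sub>v v"
    unfolding mat_range_def isproj_def by auto
  then have "P *\<^sub>v w = (P * P) *\<^sub>v v" using assms(1) unfolding isproj_def
    by (subst assoc_mult_mat_vec[of _ n n _ n]) auto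
  then show ?thesis using assms(1) v unfolding isproj_def by auto
qed

lemma range_mult_eq: assumes P: "isproj n P" and Q: "isproj n Q" and sub: "mat_range P \<subseteq> mat_range Q"
  shows "Q * P = P" "P * Q = P"
proof -
  have Pc: "P \<in> carrier_mat n n" and Qc: "Q \<in> carrier_mat n n" using P Q by (auto simp: isproj_def)
  show 1: "Q * P = P"
  proof (rule mat_eq_by_vec[of _ n])
    fix v :: "complex vec" assume v: "v \<in> carrier_vec n"
    have "P *\<^sub>v v \<in> mat_range P" using v Pc unfolding mat_range_def by auto
    then have "Q *\<^sub>v (P *\<^sub>v v) = P *\<^sub>v v" using sub proj_fix[OF Q] by auto
    then show "(Q * P) *\<^sub>v v = P *\<^sub>v v" using v Pc Qc by auto
  qed (use Pc Qc in auto)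
  have "adj (Q * P) = adj P * adj Q" using adj_mult Pc Qc by blast
  then show "P * Q = P" using 1 P Q by (simp add: isproj_def)
qed

lemma proj_unique: assumes P: "isproj n P" and Q: "isproj n Q" and eq: "mat_range P = mat_range Q"
  shows "P = Q"
proof -
  have "Q * P = P" "P * Q = P" using range_mult_eq[OF P Q] eq by auto
  moreover have "P * Q = Q" "Q * P = Q" using range_mult_eq[OF Q P] eq by auto
  ultimately show ?thesis by simp
qed

lemma proj_onto_eq: assumes "isproj n P" shows "proj_onto n (mat_range P) = P"
  unfolding proj_onto_def
  apply (rule the_equality)
  using assms proj_unique[OF _ assms] by (auto simp: isproj_def)

lemma psd_herm_idem: assumes R: "R \<in> carrier_mat n n" and idem: "R * R = R" and h: "adj R = R"
  shows "psd n R"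
  unfolding psd_def
proof (intro conjI ballI)
  fix v :: "complex vec" assume v: "v \<in> carrier_vec n"
  have "(R *\<^sub>v v) \<bullet>c v = ((R * R) *\<^sub>v v) \<bullet>c v" using idem by simp
  also have "\<dots> = (R *\<^sub>v (R *\<^sub>v v)) \<bullet>c v" using R v by simp
  also have "\<dots> = (R *\<^sub>v v) \<bullet>c (adj R *\<^sub>v v)" using R v by (intro cscalar_adj) auto
  finally have eq: "(R *\<^sub>v v) \<bullet>c v = (R *\<^sub>v v) \<bullet>c (R *\<^sub>v v)" using h by simp
  have "(R *\<^sub>v v) \<bullet>c (R *\<^sub>v v) \<ge> 0" by blast
  then show "Im ((R *\<^sub>v v) \<bullet>c v) = 0" "0 \<le> Re ((R *\<^sub>v v) \<bullet>c v)"
    unfolding eq by (auto simp: less_eq_complex_def)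
qed (use R h in auto)

lemma psd_proj_diff: assumes P: "isproj n P" and Q: "isproj n Q" and sub: "mat_range P \<subseteq> mat_range Q"
  shows "loewner_le n P Q"
proof -
  have Pc: "P \<in> carrier_mat n n" and Qc: "Q \<in> carrier_mat n n" using P Q by (auto simp: isproj_def)
  have QP: "Q * P = P" and PQ: "P * Q = P" using range_mult_eq[OF P Q sub] by auto
  have "(Q - P) * (Q - P) = Q * (Q - P) - P * (Q - P)"
    using Pc Qc by (intro minus_mult_distrib_mat) auto
  also have "Q * (Q - P) = Q * Q - Q * P" using Pc Qc by (intro mult_minus_distrib_mat) auto
  also have "P * (Q - P) = P * Q - P * P" using Pc Qc by (intro mult_minus_distrib_mat) auto
  finally have "(Q - P) * (Q - P) = (Q - P) - (P - P)" using P Q QP PQ by (simp add: isproj_def)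
  also have "\<dots> = Q - P" using Pc Qc by (intro eq_matI) auto
  finally have idem: "(Q - P) * (Q - P) = Q - P" .
  have h: "adj (Q - P) = Q - P" using adj_minus[OF Qc Pc] P Q by (simp add: isproj_def)
  show ?thesis unfolding loewner_le_def
    using psd_herm_idem[of "Q - P" n] idem h Pc Qc by auto
qed

lemma proj_step: assumes P: "isproj n P" and v: "v \<in> carrier_vec n"
  shows "\<exists>P'. isproj n P' \<and> mat_range P' = {w + t \<cdot>\<^sub>v v | w t. w \<in> mat_range P}"
proof -
  have Pc: "P \<in> carrier_mat n n" and PP: "P * P = P" and Ph: "adj P = P" using P by (auto simp: isproj_def)
  define pv where "pv = P *\<^sub>v v"
  have pvc: "pv \<in> carrier_vec n" using Pc v by (simp add: pv_def)
  define u where "u = v - pv"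
  have uc: "u \<in> carrier_vec n" using pvc v by (simp add: u_def)
  have ui: "\<And>i. i < n \<Longrightarrow> v $ i = u $ i + pv $ i" using v pvc by (simp add: u_def)
  have Ppv: "P *\<^sub>v pv = pv" unfolding pv_def using Pc v PP
    by (metis assoc_mult_mat_vec)
  have Pu: "P *\<^sub>v u = 0\<^sub>v n" unfolding u_def
    using Pc v pvc Ppv by (subst mult_minus_distrib_mat_vec[of _ n n]) (auto simp: pv_def[symmetric])
  have Pxu: "(P *\<^sub>v x) \<bullet>c u = 0" if x: "x \<in> carrier_vec n" for x
  proof -
    have "(P *\<^sub>v x) \<bullet>c u = x \<bullet>c (adj P *\<^sub>v u)" using cscalar_adj Pc x uc by blast
    also have "\<dots> = 0" using Ph Pu x by simp
    finally show ?thesis .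
  qed
  have rangeP: "w \<in> mat_range P \<longleftrightarrow> (\<exists>x \<in> carrier_vec n. w = P *\<^sub>v x)" for w
    using Pc unfolding mat_range_def by auto
  show ?thesis
  proof (cases "u = 0\<^sub>v n")
    case True
    have vpv: "v = pv"
    proof (rule eq_vecI)
      fix i assume i: "i < dim_vec pv"
      from True have "u $ i = 0\<^sub>v n $ i" by simp
      then show "v $ i = pv $ i" using i v pvc by (simp add: u_def)
    qed (use v pvc in auto)
    have "mat_range P = {w + t \<cdot>\<^sub>v v | w t. w \<in> mat_range P}"
    proof (rule subset_antisym; rule subsetI)
      fix w assume "w \<in> mat_range P"
      then obtain x where x: "x \<in> carrier_vec n" "w = P *\<^sub>v x" using rangeP by auto
      have "w = w + 0 \<cdot>\<^sub>v v" using x Pc v by (intro eq_vecI) auto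
      then show "w \<in> {w + t \<cdot>\<^sub>v v | w t. w \<in> mat_range P}" using \<open>w \<in> mat_range P\<close> by blast
    next
      fix y assume "y \<in> {w + t \<cdot>\<^sub>v v | w t. w \<in> mat_range P}"
      then obtain x t where x: "x \<in> carrier_vec n" and y: "y = P *\<^sub>v x + t \<cdot>\<^sub>v v" using rangeP by auto
      have "P *\<^sub>v (x + t \<cdot>\<^sub>v v) = P *\<^sub>v x + t \<cdot>\<^sub>v pv"
        using Pc x v by (simp add: mult_add_distrib_mat_vec[of _ n n] mult_mat_vec[of _ n n] pv_def)
      then have "y = P *\<^sub>v (x + t \<cdot>\<^sub>v v)" using y vpv by simp
      then show "y \<in> mat_range P" using rangeP x v by auto
    qed
    then show ?thesis using P by blast
  next
    case False
    define c where "c = u \<bullet>c u"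
    have c0: "c \<noteq> 0" using False uc unfolding c_def by simp
    have "c \<ge> 0" unfolding c_def by blast
    then have cc: "cnj c = c" by (auto simp: less_eq_complex_def complex_eq_iff)
    define R where "R = mat n n (\<lambda>(i,j). u $ i * cnj (u $ j) / c)"
    have Rc: "R \<in> carrier_mat n n" by (simp add: R_def)
    have Rx: "R *\<^sub>v x = ((x \<bullet>c u) / c) \<cdot>\<^sub>v u" if x: "x \<in> carrier_vec n" for x
      using x uc by (intro eq_vecI) (auto simp: R_def scalar_prod_def row_def sum_distrib_left sum_divide_distrib algebra_simps)
    define P' where "P' = P + R"
    have P'c: "P' \<in> carrier_mat n n" using Pc Rc by (simp add: P'_def)
    have P'x: "P' *\<^sub>v x = P *\<^sub>v x + ((x \<bullet>c u) / c) \<cdot>\<^sub>v u" if x: "x \<in> carrier_vec n" for x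
      unfolding P'_def using Pc Rc x Rx[OF x] by (simp add: add_mult_distrib_mat_vec[of _ n n])
    have vu: "v \<bullet>c u = c"
    proof -
      have "v = u + pv" unfolding u_def using v pvc by (intro eq_vecI) auto
      then have "v \<bullet>c u = u \<bullet>c u + pv \<bullet>c u" using uc pvc
        by (simp add: add_scalar_prod_distrib[of _ n])
      then show ?thesis using Pxu[OF v] by (simp add: c_def pv_def)
    qed
    have P'h: "adj P' = P'"
    proof (rule eq_matI)
      fix i j assume ij: "i < dim_row P'" "j < dim_col P'"
      then have i: "i < n" and j: "j < n" using P'c by auto
      have "cnj (P $$ (j,i)) = P $$ (i,j)" using herm_entry[OF Ph] Pc i j by auto
      then show "adj P' $$ (i, j) = P' $$ (i, j)"
        using i j Pc uc cc by (simp add: P'_def R_def)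
    qed (use P'c in auto)
    have P'idem: "P' * P' = P'"
    proof (rule mat_eq_by_vec[of _ n])
      fix x :: "complex vec" assume x: "x \<in> carrier_vec n"
      define s where "s = (x \<bullet>c u) / c"
      have Px: "P *\<^sub>v x \<in> carrier_vec n" using Pc x by simp
      have e1: "(P' * P') *\<^sub>v x = P' *\<^sub>v (P' *\<^sub>v x)" using P'c x by simp
      have e2: "P' *\<^sub>v x = P *\<^sub>v x + s \<cdot>\<^sub>v u" using P'x[OF x] by (simp add: s_def)
      have e3: "P *\<^sub>v (P *\<^sub>v x + s \<cdot>\<^sub>v u) = P *\<^sub>v x"
      proof -
        have "P *\<^sub>v (P *\<^sub>v x + s \<cdot>\<^sub>v u) = P *\<^sub>v (P *\<^sub>v x) + s \<cdot>\<^sub>v (P *\<^sub>v u)"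
          using Pc Px uc by (simp add: mult_add_distrib_mat_vec[of _ n n] mult_mat_vec[of _ n n])
        also have "P *\<^sub>v (P *\<^sub>v x) = P *\<^sub>v x" using PP Pc x by (metis assoc_mult_mat_vec)
        also have "P *\<^sub>v x + s \<cdot>\<^sub>v (P *\<^sub>v u) = P *\<^sub>v x" using Pu Px Pc by (intro eq_vecI) auto
        finally show ?thesis .
      qed
      have e4: "(P *\<^sub>v x + s \<cdot>\<^sub>v u) \<bullet>c u = s * c"
        using Px uc Pxu[OF x] by (simp add: add_scalar_prod_distrib[of _ n] c_def)
      have "P' *\<^sub>v (P' *\<^sub>v x) = P *\<^sub>v x + s \<cdot>\<^sub>v u"
        unfolding e2 using P'x[of "P *\<^sub>v x + s \<cdot>\<^sub>v u"] Px uc e3 e4 c0 by simp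
      then show "(P' * P') *\<^sub>v x = P' *\<^sub>v x" using e1 e2 by simp
    qed (use P'c in auto)
    show ?thesis
    proof (rule exI[of _ P'], intro conjI subset_antisym subsetI)
      show "isproj n P'" using P'c P'idem P'h by (simp add: isproj_def)
    next
      fix y assume "y \<in> mat_range P'"
      then obtain x where x: "x \<in> carrier_vec n" and y: "y = P' *\<^sub>v x"
        using P'c unfolding mat_range_def by auto
      define s where "s = (x \<bullet>c u) / c"
      have "P *\<^sub>v (x - s \<cdot>\<^sub>v v) = P *\<^sub>v x - s \<cdot>\<^sub>v pv"
        using Pc x v by (simp add: mult_minus_distrib_mat_vec[of _ n n] mult_mat_vec[of _ n n] pv_def)
      then have "y = P *\<^sub>v (x - s \<cdot>\<^sub>v v) + s \<cdot>\<^sub>v v"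
        using y P'x[OF x] Pc x v pvc uc ui unfolding s_def[symmetric]
        by (intro eq_vecI) (auto simp: algebra_simps)
      moreover have "P *\<^sub>v (x - s \<cdot>\<^sub>v v) \<in> mat_range P" using rangeP x v by auto
      ultimately show "y \<in> {w + t \<cdot>\<^sub>v v | w t. w \<in> mat_range P}" by blast
    next
      fix y assume "y \<in> {w + t \<cdot>\<^sub>v v | w t. w \<in> mat_range P}"
      then obtain z t where z: "z \<in> carrier_vec n" and y: "y = P *\<^sub>v z + t \<cdot>\<^sub>v v" using rangeP by auto
      have Pz: "P *\<^sub>v z \<in> carrier_vec n" using Pc z by simp
      have yc: "y \<in> carrier_vec n" using y Pz v by simp
      have Py: "P *\<^sub>v y = P *\<^sub>v z + t \<cdot>\<^sub>v pv"
      proof -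
        have "P *\<^sub>v y = P *\<^sub>v (P *\<^sub>v z) + t \<cdot>\<^sub>v pv"
          unfolding y using Pc Pz v by (simp add: mult_add_distrib_mat_vec[of _ n n] mult_mat_vec[of _ n n] pv_def)
        also have "P *\<^sub>v (P *\<^sub>v z) = P *\<^sub>v z" using PP Pc z by (metis assoc_mult_mat_vec)
        finally show ?thesis .
      qed
      have yu: "y \<bullet>c u = t * c"
        unfolding y using Pz v uc Pxu[OF z] vu by (simp add: add_scalar_prod_distrib[of _ n])
      have "P' *\<^sub>v y = y"
        using P'x[OF yc] Py yu c0 Pz v pvc uc ui unfolding y
        by (intro eq_vecI) (auto simp: algebra_simps)
      then have "y = P' *\<^sub>v y \<and> y \<in> carrier_vec (dim_col P')" using P'c yc by auto
      then show "y \<in> mat_range P'" unfolding mat_range_def by blast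
    qed
  qed
qed

lemma proj_cols: assumes P: "isproj n P" and A: "A \<in> carrier_mat n n"
  shows "k \<le> n \<Longrightarrow> \<exists>P'. isproj n P' \<and> mat_range P' =
    {P *\<^sub>v x + vec n (\<lambda>i. \<Sum>j<k. A $$ (i,j) * y $ j) | x y. x \<in> carrier_vec n \<and> y \<in> carrier_vec n}"
proof (induction k)
  case 0
  have Pc: "P \<in> carrier_mat n n" using P by (simp add: isproj_def)
  have "{P *\<^sub>v x + vec n (\<lambda>i. \<Sum>j<0. A $$ (i,j) * y $ j) | x y. x \<in> carrier_vec n \<and> y \<in> carrier_vec n}
      = mat_range P"
  proof (rule subset_antisym; rule subsetI)
    fix z assume "z \<in> {P *\<^sub>v x + vec n (\<lambda>i. \<Sum>j<0. A $$ (i,j) * y $ j) | x y. x \<in> carrier_vec n \<and> y \<in> carrier_vec n}"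
    then obtain x where x: "x \<in> carrier_vec n" and z: "z = P *\<^sub>v x + vec n (\<lambda>i. 0)" by auto
    have "z = P *\<^sub>v x" unfolding z using Pc x by (intro eq_vecI) auto
    then show "z \<in> mat_range P" using x Pc unfolding mat_range_def by auto
  next
    fix z assume "z \<in> mat_range P"
    then obtain x where x: "x \<in> carrier_vec n" and z: "z = P *\<^sub>v x" using Pc unfolding mat_range_def by auto
    have "z = P *\<^sub>v x + vec n (\<lambda>i. \<Sum>j<0. A $$ (i,j) * (0\<^sub>v n) $ j)" unfolding z using Pc x by (intro eq_vecI) auto
    then show "z \<in> {P *\<^sub>v x + vec n (\<lambda>i. \<Sum>j<0. A $$ (i,j) * y $ j) | x y. x \<in> carrier_vec n \<and> y \<in> carrier_vec n}"
      using x zero_carrier_vec by blast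
  qed
  then show ?case using P by auto
next
  case (Suc k)
  have Pc: "P \<in> carrier_mat n n" using P by (simp add: isproj_def)
  from Suc have k: "k < n" by simp
  from Suc obtain P1 where P1: "isproj n P1" and R1: "mat_range P1 =
    {P *\<^sub>v x + vec n (\<lambda>i. \<Sum>j<k. A $$ (i,j) * y $ j) | x y. x \<in> carrier_vec n \<and> y \<in> carrier_vec n}" by auto
  have ck: "col A k \<in> carrier_vec n" using A k by simp
  obtain P2 where P2: "isproj n P2" and R2: "mat_range P2 = {w + t \<cdot>\<^sub>v col A k | w t. w \<in> mat_range P1}"
    using proj_step[OF P1 ck] by auto
  have "mat_range P2 = {P *\<^sub>v x + vec n (\<lambda>i. \<Sum>j<Suc k. A $$ (i,j) * y $ j) | x y. x \<in> carrier_vec n \<and> y \<in> carrier_vec n}"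
  proof (rule subset_antisym; rule subsetI)
    fix z assume "z \<in> mat_range P2"
    then obtain x y t where x: "x \<in> carrier_vec n" and y: "y \<in> carrier_vec n"
      and z: "z = (P *\<^sub>v x + vec n (\<lambda>i. \<Sum>j<k. A $$ (i,j) * y $ j)) + t \<cdot>\<^sub>v col A k"
      unfolding R2 R1 by blast
    define y' where "y' = vec n (\<lambda>j. if j = k then t else y $ j)"
    have y': "y' \<in> carrier_vec n" by (simp add: y'_def)
    have "z = P *\<^sub>v x + vec n (\<lambda>i. \<Sum>j<Suc k. A $$ (i,j) * y' $ j)"
    proof (rule eq_vecI)
      fix i assume "i < dim_vec (P *\<^sub>v x + vec n (\<lambda>i. \<Sum>j<Suc k. A $$ (i,j) * y' $ j))"
      then have i: "i < n" using Pc by simp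
      have "(\<Sum>j<k. A $$ (i,j) * y' $ j) = (\<Sum>j<k. A $$ (i,j) * y $ j)"
        using k by (intro sum.cong) (auto simp: y'_def)
      moreover have "y' $ k = t" using k by (simp add: y'_def)
      ultimately have e1: "(\<Sum>j<Suc k. A $$ (i,j) * y' $ j) = (\<Sum>j<k. A $$ (i,j) * y $ j) + A $$ (i,k) * t"
        by simp
      show "z $ i = (P *\<^sub>v x + vec n (\<lambda>i. \<Sum>j<Suc k. A $$ (i,j) * y' $ j)) $ i"
        unfolding z using i k Pc A x e1 by (simp add: ac_simps)
    qed (use z Pc A k in simp)
    note zz = this
    show "z \<in> {P *\<^sub>v x + vec n (\<lambda>i. \<Sum>j<Suc k. A $$ (i,j) * y $ j) | x y. x \<in> carrier_vec n \<and> y \<in> carrier_vec n}"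
      by (rule CollectI, rule exI[of _ x], rule exI[of _ y'], use x y' zz in simp)
  next
    fix z assume "z \<in> {P *\<^sub>v x + vec n (\<lambda>i. \<Sum>j<Suc k. A $$ (i,j) * y $ j) | x y. x \<in> carrier_vec n \<and> y \<in> carrier_vec n}"
    then obtain x y where x: "x \<in> carrier_vec n" and y: "y \<in> carrier_vec n"
      and z: "z = P *\<^sub>v x + vec n (\<lambda>i. \<Sum>j<Suc k. A $$ (i,j) * y $ j)" by blast
    have "z = (P *\<^sub>v x + vec n (\<lambda>i. \<Sum>j<k. A $$ (i,j) * y $ j)) + (y $ k) \<cdot>\<^sub>v col A k"
      unfolding z using Pc A k x by (intro eq_vecI) (auto simp: algebra_simps)
    moreover have "P *\<^sub>v x + vec n (\<lambda>i. \<Sum>j<k. A $$ (i,j) * y $ j) \<in> mat_range P1"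
      unfolding R1 by (rule CollectI, rule exI[of _ x], rule exI[of _ y], use x y in simp)
    ultimately have zz: "z = (P *\<^sub>v x + vec n (\<lambda>i. \<Sum>j<k. A $$ (i,j) * y $ j)) + (y $ k) \<cdot>\<^sub>v col A k \<and> P *\<^sub>v x + vec n (\<lambda>i. \<Sum>j<k. A $$ (i,j) * y $ j) \<in> mat_range P1" by blast
    show "z \<in> mat_range P2" unfolding R2 
      by (rule CollectI, rule exI[of _ "P *\<^sub>v x + vec n (\<lambda>i. \<Sum>j<k. A $$ (i,j) * y $ j)"], rule exI[of _ "y $ k"], use zz in simp)
  qed
  then show ?case using P2 by blast
qed

lemma proj_sum: assumes P: "isproj n P" and A: "A \<in> carrier_mat n n"
  shows "\<exists>P'. isproj n P' \<and> mat_range P' = {P *\<^sub>v x + A *\<^sub>v y | x y. x \<in> carrier_vec n \<and> y \<in> carrier_vec n}"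
proof -
  have eq: "vec n (\<lambda>i. \<Sum>j<n. A $$ (i,j) * y $ j) = A *\<^sub>v y" if y: "y \<in> carrier_vec n" for y
    using A y by (intro eq_vecI) (auto simp: scalar_prod_def row_def lessThan_atLeast0 ac_simps)
  have "{P *\<^sub>v x + vec n (\<lambda>i. \<Sum>j<n. A $$ (i,j) * y $ j) | x y. x \<in> carrier_vec n \<and> y \<in> carrier_vec n}
     = {P *\<^sub>v x + A *\<^sub>v y | x y. x \<in> carrier_vec n \<and> y \<in> carrier_vec n}"
  proof (rule subset_antisym; rule subsetI)
    fix z assume "z \<in> {P *\<^sub>v x + vec n (\<lambda>i. \<Sum>j<n. A $$ (i,j) * y $ j) | x y. x \<in> carrier_vec n \<and> y \<in> carrier_vec n}"
    then obtain x y where x: "x \<in> carrier_vec n" and y: "y \<in> carrier_vec n"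
      and z: "z = P *\<^sub>v x + vec n (\<lambda>i. \<Sum>j<n. A $$ (i,j) * y $ j)" by blast
    have "z = P *\<^sub>v x + A *\<^sub>v y" using z eq[OF y] by simp
    note zz = this
    show "z \<in> {P *\<^sub>v x + A *\<^sub>v y | x y. x \<in> carrier_vec n \<and> y \<in> carrier_vec n}"
      by (rule CollectI, rule exI[of _ x], rule exI[of _ y], use x y zz in simp)
  next
    fix z assume "z \<in> {P *\<^sub>v x + A *\<^sub>v y | x y. x \<in> carrier_vec n \<and> y \<in> carrier_vec n}"
    then obtain x y where x: "x \<in> carrier_vec n" and y: "y \<in> carrier_vec n"
      and z: "z = P *\<^sub>v x + A *\<^sub>v y" by blast
    have "z = P *\<^sub>v x + vec n (\<lambda>i. \<Sum>j<n. A $$ (i,j) * y $ j)" using z eq[OF y] by simp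
    note zz = this
    show "z \<in> {P *\<^sub>v x + vec n (\<lambda>i. \<Sum>j<n. A $$ (i,j) * y $ j) | x y. x \<in> carrier_vec n \<and> y \<in> carrier_vec n}"
      by (rule CollectI, rule exI[of _ x], rule exI[of _ y], use x y zz in simp)
  qed
  then show ?thesis using proj_cols[OF P A, of n] by auto
qed

lemma zero_isproj: "isproj n (0\<^sub>m n n)"
  unfolding isproj_def by (auto intro!: eq_matI)

lemma mat_range_zero: "mat_range (0\<^sub>m n n) = {0\<^sub>v n}"
  unfolding mat_range_def by (auto intro!: exI[of _ "0\<^sub>v n"])

lemma proj_range: assumes A: "A \<in> carrier_mat n n"
  shows "\<exists>P. isproj n P \<and> mat_range P = mat_range A"
proof -
  obtain P where P: "isproj n P" and R: "mat_range P = {0\<^sub>m n n *\<^sub>v x + A *\<^sub>v y | x y. x \<in> carrier_vec n \<and> y \<in> carrier_vec n}"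
    using proj_sum[OF zero_isproj A] by auto
  have "{0\<^sub>m n n *\<^sub>v x + A *\<^sub>v y | x y. x \<in> carrier_vec n \<and> y \<in> carrier_vec n} = mat_range A"
  proof (rule subset_antisym; rule subsetI)
    fix z assume "z \<in> {0\<^sub>m n n *\<^sub>v x + A *\<^sub>v y | x y. x \<in> carrier_vec n \<and> y \<in> carrier_vec n}"
    then obtain x y where x: "x \<in> carrier_vec n" and y: "y \<in> carrier_vec n" and z: "z = 0\<^sub>m n n *\<^sub>v x + A *\<^sub>v y" by blast
    have "z = A *\<^sub>v y" unfolding z using A x y by (intro eq_vecI) auto
    then show "z \<in> mat_range A" using A y unfolding mat_range_def by auto
  next
    fix z assume "z \<in> mat_range A"
    then obtain y where y: "y \<in> carrier_vec n" and z: "z = A *\<^sub>v y" using A unfolding mat_range_def by auto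
    have "z = 0\<^sub>m n n *\<^sub>v 0\<^sub>v n + A *\<^sub>v y" unfolding z using A y by (intro eq_vecI) auto
    then show "z \<in> {0\<^sub>m n n *\<^sub>v x + A *\<^sub>v y | x y. x \<in> carrier_vec n \<and> y \<in> carrier_vec n}"
      using y zero_carrier_vec by blast
  qed
  then show ?thesis using P R by auto
qed


lemma mat_range_carrier: "A \<in> carrier_mat n n \<Longrightarrow> mat_range A \<subseteq> carrier_vec n"
  unfolding mat_range_def by auto

lemma foldr_carrier: "set xs \<subseteq> carrier_vec d \<Longrightarrow> a \<in> carrier_vec d \<Longrightarrow> foldr (+) xs a \<in> carrier_vec d"
  by (induction xs) auto

lemma foldr_add: fixes xs :: "complex vec list" shows "set xs \<subseteq> carrier_vec d \<Longrightarrow> a \<in> carrier_vec d \<Longrightarrow> b \<in> carrier_vec d \<Longrightarrow>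
  foldr (+) xs (a + b) = foldr (+) xs a + b"
proof (induction xs)
  case Nil then show ?case by simp
next
  case (Cons x xs)
  then have x: "x \<in> carrier_vec d" and F: "foldr (+) xs a \<in> carrier_vec d" using foldr_carrier by auto
  have "foldr (+) (x # xs) (a + b) = x + (foldr (+) xs a + b)" using Cons by simp
  also have "\<dots> = (x + foldr (+) xs a) + b" using x F Cons(4) by (intro eq_vecI) auto
  finally show ?case by simp
qed

lemma foldr_Suc: fixes S :: "nat \<Rightarrow> complex vec set" assumes S: "\<forall>k. S k \<subseteq> carrier_vec d" and f: "\<forall>k<Suc m. f k \<in> S k"
  shows "foldr (+) (map f [0..<Suc m]) (0\<^sub>v d) = foldr (+) (map f [0..<m]) (0\<^sub>v d) + f m"
proof -
  have fm: "f m \<in> carrier_vec d" using S f by auto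
  have fc: "\<forall>k<Suc m. f k \<in> carrier_vec d" using S f by blast
  have set: "set (map f [0..<m]) \<subseteq> carrier_vec d" using fc by auto
  have "foldr (+) (map f [0..<Suc m]) (0\<^sub>v d) = foldr (+) (map f [0..<m]) (f m + 0\<^sub>v d)" by simp
  also have "f m + 0\<^sub>v d = 0\<^sub>v d + f m" using fm by (intro eq_vecI) auto
  also have "foldr (+) (map f [0..<m]) (0\<^sub>v d + f m) = foldr (+) (map f [0..<m]) (0\<^sub>v d) + f m"
    using foldr_add[OF set _ fm] by simp
  finally show ?thesis .
qed

lemma subspace_sum_Suc: assumes S: "\<forall>k. S k \<subseteq> carrier_vec d"
  shows "subspace_sum d (Suc m) S = {u + w | u w. u \<in> subspace_sum d m S \<and> w \<in> S m}"
proof (rule subset_antisym; rule subsetI)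
  fix z assume "z \<in> subspace_sum d (Suc m) S"
  then obtain f where f: "\<forall>k<Suc m. f k \<in> S k" and z: "z = foldr (+) (map f [0..<Suc m]) (0\<^sub>v d)"
    unfolding subspace_sum_def by blast
  have z2: "z = foldr (+) (map f [0..<m]) (0\<^sub>v d) + f m" using foldr_Suc[OF S f] z by simp
  have u: "foldr (+) (map f [0..<m]) (0\<^sub>v d) \<in> subspace_sum d m S"
    unfolding subspace_sum_def using f by auto
  have w: "f m \<in> S m" using f by auto
  show "z \<in> {u + w | u w. u \<in> subspace_sum d m S \<and> w \<in> S m}"
    by (rule CollectI, rule exI[of _ "foldr (+) (map f [0..<m]) (0\<^sub>v d)"], rule exI[of _ "f m"], use z2 u w in simp)
next
  fix z assume "z \<in> {u + w | u w. u \<in> subspace_sum d m S \<and> w \<in> S m}"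
  then obtain u w where u: "u \<in> subspace_sum d m S" and w: "w \<in> S m" and z: "z = u + w" by blast
  from u obtain g where g: "\<forall>k<m. g k \<in> S k" and u2: "u = foldr (+) (map g [0..<m]) (0\<^sub>v d)"
    unfolding subspace_sum_def by blast
  define f where "f = g(m := w)"
  have f: "\<forall>k<Suc m. f k \<in> S k" using g w by (auto simp: f_def less_Suc_eq)
  have mp: "map f [0..<m] = map g [0..<m]" by (auto simp: f_def)
  have "foldr (+) (map f [0..<Suc m]) (0\<^sub>v d) = z"
  proof -
    have fm: "f m = w" by (simp add: f_def)
    have "foldr (+) (map f [0..<Suc m]) (0\<^sub>v d) = foldr (+) (map g [0..<m]) (0\<^sub>v d) + w"
      using foldr_Suc[OF S f] by (simp only: mp fm)
    then show ?thesis using z u2 by simp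
  qed
  then show "z \<in> subspace_sum d (Suc m) S" unfolding subspace_sum_def using f by blast
qed

lemma orbit_proj: assumes P: "\<forall>k. isproj d (Pk k)"
  shows "\<exists>Q. isproj d Q \<and> mat_range Q = subspace_sum d m (\<lambda>k. mat_range (Pk k))"
proof (induction m)
  case 0
  have "subspace_sum d 0 (\<lambda>k. mat_range (Pk k)) = {0\<^sub>v d}" unfolding subspace_sum_def by auto
  then show ?case using zero_isproj mat_range_zero by metis
next
  case (Suc m)
  then obtain Q where Q: "isproj d Q" and R: "mat_range Q = subspace_sum d m (\<lambda>k. mat_range (Pk k))" by auto
  have Qc: "Q \<in> carrier_mat d d" using Q by (simp add: isproj_def)
  have Pc: "Pk m \<in> carrier_mat d d" using P by (simp add: isproj_def)
  have S: "\<forall>k. mat_range (Pk k) \<subseteq> carrier_vec d" using P mat_range_carrier by (auto simp: isproj_def)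
  obtain Q' where Q': "isproj d Q'" and R': "mat_range Q' = {Q *\<^sub>v x + Pk m *\<^sub>v y | x y. x \<in> carrier_vec d \<and> y \<in> carrier_vec d}"
    using proj_sum[OF Q Pc] by auto
  have "subspace_sum d (Suc m) (\<lambda>k. mat_range (Pk k)) = {u + w | u w. u \<in> mat_range Q \<and> w \<in> mat_range (Pk m)}"
    using subspace_sum_Suc[OF S] R by simp
  also have "\<dots> = {Q *\<^sub>v x + Pk m *\<^sub>v y | x y. x \<in> carrier_vec d \<and> y \<in> carrier_vec d}"
    using Qc Pc unfolding mat_range_def by auto
  finally show ?case using Q' R' by auto
qed


lemma positive_of_cp: assumes cp: "completely_positive d T" and X: "psd d X"
  shows "psd d (T X)"
proof -
  have Xc: "X \<in> carrier_mat d d" using X by (simp add: psd_def)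
  have lin: "linear_map_on d T" using cp by (simp add: completely_positive_def)
  have TXc: "T X \<in> carrier_mat d d" using lin Xc by (simp add: linear_map_on_def)
  have all: "\<forall>k\<ge>1. \<forall>X. psd (k*d) X \<longrightarrow> psd (k*d) (ampliation d k T X)"
    using cp unfolding completely_positive_def by blast
  have "psd (1*d) (ampliation d 1 T X)" using all X by auto
  moreover have "mat d d (\<lambda>(a,b). X $$ (0 * d + a, 0 * d + b)) = X"
    using Xc by (intro eq_matI) auto
  then have "ampliation d 1 T X = T X"
    unfolding ampliation_def using TXc by (intro eq_matI) auto
  ultimately show ?thesis by simp
qed

theorem theorem4p16:
  fixes d :: nat and T :: "complex mat \<Rightarrow> complex mat"
  assumes "completely_positive d T"
    and "loewner_le d (T (1\<^sub>m d)) (1\<^sub>m d)"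
    and "stab_finite d T"
    and "corner_faithful d T"
  shows "T (1\<^sub>m d) = 1\<^sub>m d"
proof (rule ccontr)
  assume ne: "T (1\<^sub>m d) \<noteq> 1\<^sub>m d"
  note cp = assms(1)
  have lin: "linear_map_on d T" using cp by (simp add: completely_positive_def)
  have T1c: "T (1\<^sub>m d) \<in> carrier_mat d d" using lin by (simp add: linear_map_on_def)
  define D where "D = defect d T"
  have Dpsd: "psd d D" using assms(2) by (simp add: D_def defect_def loewner_le_def)
  have Dne: "D \<noteq> 0\<^sub>m d d"
  proof
    assume D0: "D = 0\<^sub>m d d"
    have "T (1\<^sub>m d) = 1\<^sub>m d"
    proof (rule eq_matI)
      fix i j assume "i < dim_row (1\<^sub>m d)" "j < dim_col (1\<^sub>m d)"
      then have ij: "i < d" "j < d" by auto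
      have "D $$ (i,j) = 0" using D0 ij by simp
      then show "T (1\<^sub>m d) $$ (i,j) = 1\<^sub>m d $$ (i,j)" using ij T1c by (simp add: D_def defect_def)
    qed (use T1c in auto)
    then show False using ne by simp
  qed
  define x where "x = (\<lambda>k. (T ^^ k) D)"
  have xpsd: "psd d (x k)" for k
    by (induction k) (auto simp: x_def Dpsd positive_of_cp[OF cp])
  have xc: "x k \<in> carrier_mat d d" for k using xpsd[of k] by (simp add: psd_def)
  define n where "n = stab_index d T"
  have ex: "\<exists>n. n \<ge> 1 \<and> (T ^^ n) D = 0\<^sub>m d d" using assms(3) by (simp add: stab_finite_def D_def)
  have n1: "n \<ge> 1" and xn: "x n = 0\<^sub>m d d"
    using LeastI_ex[OF ex] unfolding n_def stab_index_def x_def D_def by auto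
  have nmin: "\<not> (m \<ge> 1 \<and> x m = 0\<^sub>m d d)" if "m < n" for m
    using not_less_Least[of m "\<lambda>n. n \<ge> 1 \<and> (T ^^ n) D = 0\<^sub>m d d"] that
    unfolding n_def stab_index_def x_def D_def by auto
  define m where "m = n - 1"
  have nm: "n = Suc m" using n1 by (simp add: m_def)
  have xm_ne: "x m \<noteq> 0\<^sub>m d d"
  proof (cases "m = 0")
    case True then show ?thesis using Dne by (simp add: x_def)
  next
    case False then show ?thesis using nmin[of m] nm by auto
  qed
  have Txm: "T (x m) = 0\<^sub>m d d" using xn nm by (simp add: x_def)
  define Pk where "Pk = (\<lambda>k. SOME P. isproj d P \<and> mat_range P = mat_range (x k))"
  have Pk: "isproj d (Pk k) \<and> mat_range (Pk k) = mat_range (x k)" for k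
    unfolding Pk_def by (rule someI_ex, rule proj_range[OF xc])
  have supp_eq: "supp d (x k) = Pk k" for k
    unfolding supp_def using Pk[of k] proj_onto_eq[of d "Pk k"] by simp
  have Pkall: "\<forall>k. isproj d (Pk k)" using Pk by blast
  obtain Q where Q: "isproj d Q" and QR: "mat_range Q = subspace_sum d n (\<lambda>k. mat_range (Pk k))"
    using orbit_proj[OF Pkall] by blast
  have orb: "orbit_support d T = Q"
    unfolding orbit_support_def n_def[symmetric] D_def[symmetric]
    using supp_eq QR proj_onto_eq[OF Q] unfolding x_def by simp
  obtain Q0 where Q0: "isproj d Q0" and Q0R: "mat_range Q0 = subspace_sum d m (\<lambda>k. mat_range (Pk k))"
    using orbit_proj[OF Pkall] by blast
  have Q0c: "Q0 \<in> carrier_mat d d" using Q0 by (simp add: isproj_def)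
  have zero_in: "0\<^sub>v d \<in> subspace_sum d m (\<lambda>k. mat_range (Pk k))"
  proof -
    have "Q0 *\<^sub>v 0\<^sub>v d = 0\<^sub>v d" using Q0c by (intro eq_vecI) auto
    then have "0\<^sub>v d \<in> mat_range Q0" using Q0c unfolding mat_range_def
      by (metis (mono_tags, lifting) carrier_matD(2) mem_Collect_eq zero_carrier_vec)
    then show ?thesis using Q0R by simp
  qed
  have S: "\<forall>k. mat_range (Pk k) \<subseteq> carrier_vec d"
    using Pkall mat_range_carrier by (auto simp: isproj_def)
  have sub: "mat_range (Pk m) \<subseteq> mat_range Q"
  proof
    fix w assume w: "w \<in> mat_range (Pk m)"
    then have wc: "w \<in> carrier_vec d" using S by auto
    have "w = 0\<^sub>v d + w" using wc by simp
    then have "w \<in> {u + w | u w. u \<in> subspace_sum d m (\<lambda>k. mat_range (Pk k)) \<and> w \<in> mat_range (Pk m)}"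
      using zero_in w by blast
    then show "w \<in> mat_range Q" unfolding QR nm subspace_sum_Suc[OF S] .
  qed
  have le: "loewner_le d (supp d (x m)) (orbit_support d T)"
    unfolding orb supp_eq using psd_proj_diff[OF _ Q sub] Pk[of m] by blast
  have "T (x m) \<noteq> 0\<^sub>m d d"
    using assms(4) xpsd[of m] xm_ne le unfolding corner_faithful_def by blast
  then show False using Txm by simp
qed

end
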